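(* Let $f:\mathcal{P}^n\to X$ be an onto, efficient and tops-only rule. Then $f$ is NOM if and only if at least one of the following holds: (i) there is at most one agent $i\in N$ with $V_i\neq\emptyset$ and, moreover, $SV_i=V_i$; (ii) there is $y\in X$ such that $SV_i=V_i\subseteq\{y\}$ for each $i\in N$.
   Context: $N=\{1,\dots,n\}$, $n\ge2$, agents; $X$ finite alternatives, $|X|\ge2$; $\mathcal{P}$ all strict linear orders on $X$; $t(P_i)$ the top of $P_i$. A rule $f:\mathcal{P}^n\to X$ is onto; tops-only if $f(P)=f(P')$ whenever all tops coincide; efficient if for each $P$ there is no $x\in X$ with $xP_if(P)$ for all $i$. Option set $O^f(P_i)=\{f(P_i,P_{-i}):P_{-i}\in\mathcal{P}^{n-1}\}$. $P_i'$ is a manipulation at $P_i$ if $f(P_i',P_{-i})P_if(P_i,P_{-i})$ for some $P_{-i}$; it is obvious if the $P_i$-worst element of $O^f(P_i')$ is strictly $P_i$-better than the $P_i$-worst element of $O^f(P_i)$, or the $P_i$-best element of $O^f(P_i')$ is strictly $P_i$-better than the $P_i$-best element of $O^f(P_i)$. $f$ is NOM if there are no obvious manipulations. Agent $i$ vetoes $x$ via $P_i$ if $x\notin O^f(P_i)$; $V_i$ = alternatives $i$ vetoes via some preference; $\mathcal{V}_i^x$ = preferences via which $i$ vetoes $x$; $i$ strongly vetoes $x$ if $\mathcal{V}_i^x=\{P_i:t(P_i)\ne x\}$; $SV_i$ = set of alternatives strongly vetoed by $i$. *)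

theory Defs
  imports Main
begin

(* Agents: elements of a finite type 'i (N); alternatives: elements of a finite type 'a (X).
   A preference is a strict linear order on X, as a relation: (x,y) \<in> R means x R y
   ("x is strictly preferred to y"). *)

definition prefs :: "'a rel set" where
  "prefs = {R. strict_linear_order R}"

definition profiles :: "('i \<Rightarrow> 'a rel) set" where
  "profiles = {P. \<forall>i. P i \<in> prefs}"

definition top :: "'a rel \<Rightarrow> 'a" where
  "top R = (THE x. \<forall>y. y \<noteq> x \<longrightarrow> (x, y) \<in> R)"

definition onto :: "(('i \<Rightarrow> 'a rel) \<Rightarrow> 'a) \<Rightarrow> bool" where
  "onto f \<longleftrightarrow> (\<forall>x. \<exists>P\<in>profiles. f P = x)"

definition tops_only :: "(('i \<Rightarrow> 'a rel) \<Rightarrow> 'a) \<Rightarrow> bool" where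
  "tops_only f \<longleftrightarrow> (\<forall>P\<in>profiles. \<forall>P'\<in>profiles.
      (\<forall>i. top (P i) = top (P' i)) \<longrightarrow> f P = f P')"

definition efficient :: "(('i \<Rightarrow> 'a rel) \<Rightarrow> 'a) \<Rightarrow> bool" where
  "efficient f \<longleftrightarrow> (\<forall>P\<in>profiles. \<not> (\<exists>x. \<forall>i. (x, f P) \<in> P i))"

definition option_set :: "(('i \<Rightarrow> 'a rel) \<Rightarrow> 'a) \<Rightarrow> 'i \<Rightarrow> 'a rel \<Rightarrow> 'a set" where
  "option_set f i R = {f (P(i := R)) | P. P \<in> profiles}"

definition worst :: "'a rel \<Rightarrow> 'a set \<Rightarrow> 'a" where
  "worst R S = (THE w. w \<in> S \<and> (\<forall>y\<in>S. y \<noteq> w \<longrightarrow> (y, w) \<in> R))"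

definition best :: "'a rel \<Rightarrow> 'a set \<Rightarrow> 'a" where
  "best R S = (THE b. b \<in> S \<and> (\<forall>y\<in>S. y \<noteq> b \<longrightarrow> (b, y) \<in> R))"

definition manipulation :: "(('i \<Rightarrow> 'a rel) \<Rightarrow> 'a) \<Rightarrow> 'i \<Rightarrow> 'a rel \<Rightarrow> 'a rel \<Rightarrow> bool" where
  "manipulation f i R R' \<longleftrightarrow>
     (\<exists>P\<in>profiles. (f (P(i := R')), f (P(i := R))) \<in> R)"

definition obvious_manipulation ::
    "(('i \<Rightarrow> 'a rel) \<Rightarrow> 'a) \<Rightarrow> 'i \<Rightarrow> 'a rel \<Rightarrow> 'a rel \<Rightarrow> bool" where
  "obvious_manipulation f i R R' \<longleftrightarrow> manipulation f i R R' \<and>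
     ((worst R (option_set f i R'), worst R (option_set f i R)) \<in> R \<or>
      (best R (option_set f i R'), best R (option_set f i R)) \<in> R)"

definition NOM :: "(('i \<Rightarrow> 'a rel) \<Rightarrow> 'a) \<Rightarrow> bool" where
  "NOM f \<longleftrightarrow> (\<forall>i. \<forall>R\<in>prefs. \<forall>R'\<in>prefs. \<not> obvious_manipulation f i R R')"

definition veto_set :: "(('i \<Rightarrow> 'a rel) \<Rightarrow> 'a) \<Rightarrow> 'i \<Rightarrow> 'a set" where
  "veto_set f i = {x. \<exists>R\<in>prefs. x \<notin> option_set f i R}"

definition veto_prefs :: "(('i \<Rightarrow> 'a rel) \<Rightarrow> 'a) \<Rightarrow> 'i \<Rightarrow> 'a \<Rightarrow> 'a rel set" where
  "veto_prefs f i x = {R\<in>prefs. x \<notin> option_set f i R}"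

definition strongly_vetoes :: "(('i \<Rightarrow> 'a rel) \<Rightarrow> 'a) \<Rightarrow> 'i \<Rightarrow> 'a \<Rightarrow> bool" where
  "strongly_vetoes f i x \<longleftrightarrow> veto_prefs f i x = {R\<in>prefs. top R \<noteq> x}"

definition strong_veto_set :: "(('i \<Rightarrow> 'a rel) \<Rightarrow> 'a) \<Rightarrow> 'i \<Rightarrow> 'a set" where
  "strong_veto_set f i = {x. strongly_vetoes f i x}"

end

theory Submission imports Defs begin

lemma pref_props:
  assumes "R \<in> prefs"
  shows "trans R" "irrefl R" "\<And>a b. a \<noteq> b \<Longrightarrow> (a,b) \<in> R \<or> (b,a) \<in> R"
    "\<And>a b. (a,b) \<in> R \<Longrightarrow> (b,a) \<notin> R" "\<And>a. (a,a) \<notin> R"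
  using assms unfolding prefs_def strict_linear_order_on_def total_on_def irrefl_def trans_def
  by blast+

lemma pref_wf:
  assumes "R \<in> prefs"
  shows "wf (R :: ('a::finite) rel)" "wf (R\<inverse>)"
proof -
  have "acyclic R" unfolding acyclic_irrefl trancl_id[OF pref_props(1)[OF assms]]
    by (rule pref_props(2)[OF assms])
  moreover have "finite R" by simp
  ultimately show "wf R" "wf (R\<inverse>)" using finite_acyclic_wf finite_acyclic_wf_converse by blast+
qed

lemma top_unique:
  assumes "R \<in> prefs" "\<forall>y. y \<noteq> c \<longrightarrow> (c, y) \<in> R"
  shows "top R = c"
  unfolding top_def
proof (rule the_equality)
  show "\<forall>y. y \<noteq> c \<longrightarrow> (c, y) \<in> R" by fact
  fix x assume "\<forall>y. y \<noteq> x \<longrightarrow> (x, y) \<in> R"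
  show "x = c"
  proof (rule ccontr)
    assume "x \<noteq> c"
    then have "(x,c) \<in> R" "(c,x) \<in> R" using assms(2) \<open>\<forall>y. y \<noteq> x \<longrightarrow> (x, y) \<in> R\<close> by auto
    then show False using pref_props(4)[OF assms(1)] by blast
  qed
qed



lemma top_prop:
  assumes "R \<in> prefs" "y \<noteq> top R"
  shows "(top R, (y::'a::finite)) \<in> R"
proof -
  obtain z where z: "\<And>y. (y, z) \<in> R \<Longrightarrow> y \<notin> UNIV"
    using wfE_min[OF pref_wf(1)[OF assms(1)], of undefined UNIV] by auto
  then have "\<forall>y. y \<noteq> z \<longrightarrow> (z, y) \<in> R" using pref_props(3)[OF assms(1)] by blast
  moreover then have "top R = z" using top_unique[OF assms(1)] by blast
  ultimately show ?thesis using assms(2) by simp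
qed

lemma worst_prop:
  assumes "R \<in> prefs" "S \<noteq> {}"
  shows "worst R (S::'a::finite set) \<in> S" "\<And>y. y \<in> S \<Longrightarrow> y \<noteq> worst R S \<Longrightarrow> (y, worst R S) \<in> R"
proof -
  obtain s where s: "s \<in> S" using assms by auto
  obtain z where z: "z \<in> S" "\<And>y. (y, z) \<in> R\<inverse> \<Longrightarrow> y \<notin> S"
    using wfE_min[OF pref_wf(2)[OF assms(1)] s] by metis
  have z2: "\<forall>y\<in>S. y \<noteq> z \<longrightarrow> (y, z) \<in> R"
  proof (intro ballI impI)
    fix y assume "y \<in> S" "y \<noteq> z"
    then have "(z, y) \<notin> R" using z(2) by auto
    then show "(y, z) \<in> R" using pref_props(3)[OF assms(1) \<open>y \<noteq> z\<close>] by simp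
  qed
  have "worst R S = z" unfolding worst_def
  proof (rule the_equality)
    show "z \<in> S \<and> (\<forall>y\<in>S. y \<noteq> z \<longrightarrow> (y, z) \<in> R)" using z z2 by blast
    fix w assume w: "w \<in> S \<and> (\<forall>y\<in>S. y \<noteq> w \<longrightarrow> (y, w) \<in> R)"
    show "w = z"
    proof (rule ccontr)
      assume "w \<noteq> z"
      then have "(w,z) \<in> R" "(z,w) \<in> R" using w z z2 by auto
      then show False using pref_props(4)[OF assms(1)] by blast
    qed
  qed
  then show "worst R S \<in> S" "\<And>y. y \<in> S \<Longrightarrow> y \<noteq> worst R S \<Longrightarrow> (y, worst R S) \<in> R"
    using z z2 by auto
qed

lemma best_prop:
  assumes "R \<in> prefs" "c \<in> S" "\<forall>y\<in>S. y \<noteq> c \<longrightarrow> (c, y) \<in> R"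
  shows "best R S = c"
  unfolding best_def
proof (rule the_equality)
  show "c \<in> S \<and> (\<forall>y\<in>S. y \<noteq> c \<longrightarrow> (c, y) \<in> R)" using assms by blast
  fix w assume w: "w \<in> S \<and> (\<forall>y\<in>S. y \<noteq> w \<longrightarrow> (w, y) \<in> R)"
  show "w = c"
  proof (rule ccontr)
    assume "w \<noteq> c"
    then have "(w,c) \<in> R" "(c,w) \<in> R" using w assms by auto
    then show False using pref_props(4)[OF assms(1)] by blast
  qed
qed

definition rk :: "('a \<Rightarrow> nat) \<Rightarrow> 'a rel" where "rk r = {(a,b). r a < r b}"

lemma rk_pref:
  fixes r :: "'a \<Rightarrow> nat"
  assumes "inj r" shows "rk r \<in> prefs"
proof -
  have "trans (rk r)" unfolding rk_def trans_def by auto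
  moreover have "irrefl (rk r)" unfolding rk_def irrefl_def by auto
  moreover have "total_on UNIV (rk r)" unfolding rk_def total_on_def
  proof (intro ballI impI)
    fix a b :: 'a assume "a \<noteq> b"
    then have "r a \<noteq> r b" using assms by (auto simp: inj_def)
    then show "(a, b) \<in> {(a, b). r a < r b} \<or> (b, a) \<in> {(a, b). r a < r b}" by auto
  qed
  ultimately show ?thesis unfolding prefs_def strict_linear_order_on_def by simp
qed

lemma ex_rank: "\<exists>(r::'a::finite \<Rightarrow> nat) n. inj r \<and> (\<forall>y. r y < n)"
proof -
  obtain r :: "'a \<Rightarrow> nat" and n where "r ` UNIV = {i. i < n}" "inj_on r UNIV"
    using finite_imp_inj_to_nat_seg[of "UNIV :: 'a set"] by auto
  then show ?thesis by blast
qed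

lemma ex_top_bottom:
  assumes "(c::'a::finite) \<noteq> x"
  shows "\<exists>R\<in>prefs. top R = c \<and> (\<forall>y. y \<noteq> x \<longrightarrow> (y, x) \<in> R)"
proof -
  obtain r0 :: "'a \<Rightarrow> nat" and n where r0: "inj r0" "\<forall>y. r0 y < n" using ex_rank by blast
  define r where "r y = (if y = c then 0 else if y = x then n + 2 else r0 y + 1)" for y
  have b: "r0 y + 1 \<noteq> n + 2" "n + 2 \<noteq> r0 y + 1" for y using r0(2)[rule_format, of y] by linarith+
  have "inj r" using b r0(1) assms unfolding inj_def r_def by (auto split: if_splits)
  then have P: "rk r \<in> prefs" by (rule rk_pref)
  have "\<forall>y. y \<noteq> c \<longrightarrow> (c, y) \<in> rk r" using assms unfolding rk_def r_def by auto
  have b2: "r0 y + 1 < n + 2" for y using r0(2)[rule_format, of y] by linarith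
  have "\<forall>y. y \<noteq> c \<longrightarrow> (c, y) \<in> rk r" using assms unfolding rk_def r_def by auto
  then have "top (rk r) = c" using top_unique[OF P] by blast
  moreover have "\<forall>y. y \<noteq> x \<longrightarrow> (y, x) \<in> rk r" using assms b2 unfolding rk_def r_def
    by auto
  ultimately show ?thesis using P by blast
qed

lemma ex_top_second:
  assumes "(z::'a::finite) \<noteq> x"
  shows "\<exists>R\<in>prefs. top R = z \<and> (\<forall>y. y \<noteq> x \<longrightarrow> y \<noteq> z \<longrightarrow> (x, y) \<in> R)"
proof -
  obtain r0 :: "'a \<Rightarrow> nat" and n where r0: "inj r0" "\<forall>y. r0 y < n" using ex_rank by blast
  define r where "r y = (if y = z then 0 else if y = x then 1 else r0 y + 2)" for y
  have "inj r" using r0(1) assms unfolding inj_def r_def by (auto split: if_splits)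
  then have P: "rk r \<in> prefs" by (rule rk_pref)
  have "\<forall>y. y \<noteq> z \<longrightarrow> (z, y) \<in> rk r" using assms unfolding rk_def r_def by auto
  then have "top (rk r) = z" using top_unique[OF P] by blast
  moreover have "\<forall>y. y \<noteq> x \<longrightarrow> y \<noteq> z \<longrightarrow> (x, y) \<in> rk r" using assms r0 unfolding rk_def r_def
    by auto
  ultimately show ?thesis using P by blast
qed


lemma upd_prof: "P \<in> profiles \<Longrightarrow> R \<in> prefs \<Longrightarrow> P(i := R) \<in> profiles"
  unfolding profiles_def by auto

lemma const_prof: "R \<in> prefs \<Longrightarrow> (\<lambda>_. R) \<in> profiles"
  unfolding profiles_def by auto

lemma opt_top_eq:
  assumes "tops_only f" "R \<in> prefs" "R' \<in> prefs" "top R = top R'"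
  shows "option_set f i R = option_set f i R'"
proof -
  have *: "f (P(i := R)) = f (P(i := R'))" if "P \<in> profiles" for P
  proof -
    have "\<forall>k. top ((P(i := R)) k) = top ((P(i := R')) k)" by (simp add: assms(4))
    then show ?thesis using assms(1)[unfolded tops_only_def, rule_format,
      OF upd_prof[OF that assms(2), of i] upd_prof[OF that assms(3), of i]] by blast
  qed
  show ?thesis unfolding option_set_def
  proof (intro equalityI subsetI)
    fix x assume "x \<in> {f (P(i := R)) |P. P \<in> profiles}"
    then obtain P where "P \<in> profiles" "x = f (P(i := R))" by blast
    then have "x = f (P(i := R'))" using * by simp
    then show "x \<in> {f (P(i := R')) |P. P \<in> profiles}" using \<open>P \<in> profiles\<close> by blast
  next
    fix x assume "x \<in> {f (P(i := R')) |P. P \<in> profiles}"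
    then obtain P where "P \<in> profiles" "x = f (P(i := R'))" by blast
    then have "x = f (P(i := R))" using * by simp
    then show "x \<in> {f (P(i := R)) |P. P \<in> profiles}" using \<open>P \<in> profiles\<close> by blast
  qed
qed

lemma unanim:
  fixes f :: "('i \<Rightarrow> 'a::finite rel) \<Rightarrow> 'a"
  assumes "efficient f" "R \<in> prefs"
  shows "f (\<lambda>_. R) = top R"
proof (rule ccontr)
  assume ne: "f (\<lambda>_. R) \<noteq> top R"
  have "(top R, f (\<lambda>_. R)) \<in> R" using top_prop[OF assms(2)] ne by simp
  then have "\<exists>x. \<forall>i::'i. (x, f (\<lambda>_. R)) \<in> (\<lambda>_. R) i" by blast
  moreover have "\<not> (\<exists>x. \<forall>i::'i. (x, f (\<lambda>_. R)) \<in> (\<lambda>_. R) i)"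
    using assms(1)[unfolded efficient_def, rule_format, OF const_prof[OF assms(2)]] .
  ultimately show False by contradiction
qed

lemma top_in_opt:
  fixes f :: "('i \<Rightarrow> 'a::finite rel) \<Rightarrow> 'a"
  assumes "efficient f" "R \<in> prefs"
  shows "top R \<in> option_set f i R"
proof -
  have "(\<lambda>_. R)(i := R) = (\<lambda>_. R)" by auto
  then have "top R = f ((\<lambda>_. R)(i := R))" using unanim[OF assms] by simp
  then show ?thesis unfolding option_set_def using const_prof[OF assms(2)] by blast
qed

lemma best_opt:
  fixes f :: "('i \<Rightarrow> 'a::finite rel) \<Rightarrow> 'a"
  assumes "efficient f" "R \<in> prefs"
  shows "best R (option_set f i R) = top R"
  by (rule best_prop[OF assms(2) top_in_opt[OF assms]]) (auto intro: top_prop[OF assms(2)])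

lemma no_obv_if_sub:
  fixes f :: "('i \<Rightarrow> 'a::finite rel) \<Rightarrow> 'a"
  assumes eff: "efficient f" and R: "R \<in> prefs" and R': "R' \<in> prefs"
    and sub: "option_set f i R - {top R} \<subseteq> option_set f i R'"
  shows "\<not> obvious_manipulation f i R R'"
proof -
  define O1 where "O1 = option_set f i R"
  define O2 where "O2 = option_set f i R'"
  have ne1: "O1 \<noteq> {}" using top_in_opt[OF eff R] O1_def by auto
  have ne2: "O2 \<noteq> {}" using top_in_opt[OF eff R'] O2_def by auto
  have topnot: "(y, top R) \<notin> R" for y
  proof
    assume "(y, top R) \<in> R"
    moreover have "y \<noteq> top R" using calculation pref_props(5)[OF R] by metis
    ultimately show False using top_prop[OF R] pref_props(4)[OF R] by blast
  qed
  have w: "(worst R O2, worst R O1) \<notin> R"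
  proof (cases "worst R O1 = top R")
    case True then show ?thesis using topnot by simp
  next
    case False
    then have "worst R O1 \<in> O2" using worst_prop(1)[OF R ne1] sub O1_def O2_def by blast
    then have "worst R O1 = worst R O2 \<or> (worst R O1, worst R O2) \<in> R"
      using worst_prop(2)[OF R ne2] by blast
    then show ?thesis using pref_props(4,5)[OF R] by metis
  qed
  have b: "(best R O2, best R O1) \<notin> R" using best_opt[OF eff R] topnot O1_def by simp
  show ?thesis using w b unfolding obvious_manipulation_def O1_def O2_def by blast
qed

lemma ex_other: "card (UNIV :: 'a::finite set) \<ge> 2 \<Longrightarrow> \<exists>c::'a. c \<noteq> x"
proof (rule ccontr)
  assume "card (UNIV :: 'a set) \<ge> 2" "\<not> (\<exists>c::'a. c \<noteq> x)"
  then have "(UNIV :: 'a set) = {x}" by auto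
  then have "card (UNIV :: 'a set) = card {x}" by (rule arg_cong)
  then show False using \<open>card (UNIV :: 'a set) \<ge> 2\<close> by simp
qed

lemma SV_sub_V:
  fixes f :: "('i \<Rightarrow> 'a::finite rel) \<Rightarrow> 'a"
  assumes "card (UNIV :: 'a set) \<ge> 2"
  shows "strong_veto_set f i \<subseteq> veto_set f i"
proof
  fix x assume "x \<in> strong_veto_set f i"
  then have sv: "veto_prefs f i x = {R\<in>prefs. top R \<noteq> x}"
    unfolding strong_veto_set_def strongly_vetoes_def by simp
  obtain c where "c \<noteq> x" using ex_other[OF assms] by blast
  then obtain R where R: "R \<in> prefs" "top R = c" using ex_top_bottom by blast
  then have "R \<in> veto_prefs f i x" using sv \<open>c \<noteq> x\<close> by simp
  then show "x \<in> veto_set f i" unfolding veto_prefs_def veto_set_def by blast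
qed

lemma sub_from_SV:
  fixes f :: "('i \<Rightarrow> 'a::finite rel) \<Rightarrow> 'a"
  assumes eq: "strong_veto_set f i = veto_set f i" and R: "R \<in> prefs" and R': "R' \<in> prefs"
  shows "option_set f i R - {top R} \<subseteq> option_set f i R'"
proof
  fix x assume x: "x \<in> option_set f i R - {top R}"
  show "x \<in> option_set f i R'"
  proof (rule ccontr)
    assume "x \<notin> option_set f i R'"
    then have "x \<in> veto_set f i" using R' unfolding veto_set_def by blast
    then have "veto_prefs f i x = {R\<in>prefs. top R \<noteq> x}"
      using eq unfolding strong_veto_set_def strongly_vetoes_def by blast
    then have "R \<in> veto_prefs f i x" using R x by auto
    then show False using x unfolding veto_prefs_def by auto
  qed
qed

lemma NOM_if:
  fixes f :: "('i \<Rightarrow> 'a::finite rel) \<Rightarrow> 'a"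
  assumes "efficient f" "\<forall>i. strong_veto_set f i = veto_set f i"
  shows "NOM f"
  unfolding NOM_def
proof (intro allI ballI)
  fix i and R R' :: "'a rel" assume R: "R \<in> prefs" and R': "R' \<in> prefs"
  show "\<not> obvious_manipulation f i R R'"
    by (rule no_obv_if_sub[OF assms(1) R R' sub_from_SV[OF assms(2)[rule_format] R R']])
qed

lemma V_sub_SV:
  fixes f :: "('i \<Rightarrow> 'a::finite rel) \<Rightarrow> 'a"
  assumes nom: "NOM f" and eff: "efficient f" and to: "tops_only f"
  shows "veto_set f i \<subseteq> strong_veto_set f i"
proof
  fix x assume "x \<in> veto_set f i"
  then obtain R0 where R0: "R0 \<in> prefs" "x \<notin> option_set f i R0" unfolding veto_set_def by blast
  have "veto_prefs f i x = {R\<in>prefs. top R \<noteq> x}"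
  proof (intro equalityI subsetI)
    fix R assume "R \<in> veto_prefs f i x"
    then show "R \<in> {R\<in>prefs. top R \<noteq> x}" using top_in_opt[OF eff] unfolding veto_prefs_def by auto
  next
    fix R assume "R \<in> {R\<in>prefs. top R \<noteq> x}"
    then have R: "R \<in> prefs" "top R \<noteq> x" by auto
    have "x \<notin> option_set f i R"
    proof
      assume xin: "x \<in> option_set f i R"
      obtain R1 where R1: "R1 \<in> prefs" "top R1 = top R" "\<forall>y. y \<noteq> x \<longrightarrow> (y, x) \<in> R1"
        using ex_top_bottom[OF R(2)] by blast
      have O1: "option_set f i R1 = option_set f i R" using opt_top_eq[OF to R1(1) R(1) R1(2)] .
      have "x \<in> option_set f i R1" using xin O1 by simp
      then obtain P where P0: "P \<in> profiles" "x = f (P(i := R1))" unfolding option_set_def by blast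
      then have P: "P \<in> profiles" "f (P(i := R1)) = x" by auto
      have yin: "f (P(i := R0)) \<in> option_set f i R0" using P(1) unfolding option_set_def by auto
      then have "f (P(i := R0)) \<noteq> x" using R0 by auto
      then have man: "manipulation f i R1 R0" using P R1(3) unfolding manipulation_def by auto
      have ne0: "option_set f i R0 \<noteq> {}" using yin by auto
      have ne1: "option_set f i R1 \<noteq> {}" using xin O1 by auto
      have wx: "worst R1 (option_set f i R1) = x"
      proof (rule ccontr)
        assume ne: "worst R1 (option_set f i R1) \<noteq> x"
        then have "(x, worst R1 (option_set f i R1)) \<in> R1"
          using worst_prop(2)[OF R1(1) ne1] xin O1 by auto
        moreover have "(worst R1 (option_set f i R1), x) \<in> R1" using R1(3) ne by auto
        ultimately show False using pref_props(4)[OF R1(1)] by blast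
      qed
      have "worst R1 (option_set f i R0) \<noteq> x" using worst_prop(1)[OF R1(1) ne0] R0 by auto
      then have "(worst R1 (option_set f i R0), worst R1 (option_set f i R1)) \<in> R1"
        using wx R1(3) by auto
      then have "obvious_manipulation f i R1 R0" using man unfolding obvious_manipulation_def by auto
      then show False using nom R1(1) R0(1) unfolding NOM_def by blast
    qed
    then show "R \<in> veto_prefs f i x" using R unfolding veto_prefs_def by auto
  qed
  then show "x \<in> strong_veto_set f i" unfolding strong_veto_set_def strongly_vetoes_def by simp
qed

lemma two_vetoers:
  fixes f :: "('i \<Rightarrow> 'a::finite rel) \<Rightarrow> 'a"
  assumes eff: "efficient f" and eq: "\<forall>i. strong_veto_set f i = veto_set f i"
    and ij: "i \<noteq> j" and x: "x \<in> veto_set f i" and z: "z \<in> veto_set f j"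
  shows "x = z"
proof (rule ccontr)
  assume xz: "x \<noteq> z"
  obtain Ri where Ri: "Ri \<in> prefs" "top Ri = z" "\<forall>y. y \<noteq> x \<longrightarrow> y \<noteq> z \<longrightarrow> (x, y) \<in> Ri"
    using ex_top_second[of z x] xz by metis
  obtain Rj where Rj: "Rj \<in> prefs" "top Rj = x"
    using ex_top_second[of x z] xz by metis
  define P where "P = (\<lambda>k. if k = i then Ri else Rj)"
  have P: "P \<in> profiles" unfolding profiles_def P_def using Ri Rj by auto
  have Pi: "P(i := Ri) = P" unfolding P_def by (auto simp: fun_eq_iff)
  have Pj: "P(j := Rj) = P" unfolding P_def using ij by (auto simp: fun_eq_iff)
  have yi: "f P \<in> option_set f i Ri" using P Pi unfolding option_set_def by (metis (mono_tags, lifting) mem_Collect_eq)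
  have yj: "f P \<in> option_set f j Rj" using P Pj unfolding option_set_def by (metis (mono_tags, lifting) mem_Collect_eq)
  have vi: "veto_prefs f i x = {R\<in>prefs. top R \<noteq> x}"
    using eq x unfolding strong_veto_set_def strongly_vetoes_def by blast
  have vj: "veto_prefs f j z = {R\<in>prefs. top R \<noteq> z}"
    using eq z unfolding strong_veto_set_def strongly_vetoes_def by blast
  have "Ri \<in> veto_prefs f i x" using vi Ri xz by auto
  then have "f P \<noteq> x" using yi unfolding veto_prefs_def by auto
  have "Rj \<in> veto_prefs f j z" using vj Rj xz by auto
  then have "f P \<noteq> z" using yj unfolding veto_prefs_def by auto
  have "\<forall>k. (x, f P) \<in> P k"
  proof
    fix k show "(x, f P) \<in> P k"
    proof (cases "k = i")
      case True then show ?thesis using Ri(3) \<open>f P \<noteq> x\<close> \<open>f P \<noteq> z\<close> unfolding P_def by auto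
    next
      case False then show ?thesis using top_prop[OF Rj(1)] Rj(2) \<open>f P \<noteq> x\<close> unfolding P_def by auto
    qed
  qed
  then show False using eff P unfolding efficient_def by blast
qed

theorem corollary1:
  fixes f :: "('i::finite \<Rightarrow> 'a::finite rel) \<Rightarrow> 'a"
  assumes "card (UNIV :: 'i set) \<ge> 2" and "card (UNIV :: 'a set) \<ge> 2"
    and "onto f" and "efficient f" and "tops_only f"
  shows "NOM f \<longleftrightarrow>
    ((\<forall>i j. veto_set f i \<noteq> {} \<longrightarrow> veto_set f j \<noteq> {} \<longrightarrow> i = j) \<and>
       (\<forall>i. veto_set f i \<noteq> {} \<longrightarrow> strong_veto_set f i = veto_set f i))
    \<or> (\<exists>y. \<forall>i. strong_veto_set f i = veto_set f i \<and> veto_set f i \<subseteq> {y})"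
proof -
  have sub: "strong_veto_set f i \<subseteq> veto_set f i" for i using SV_sub_V[OF assms(2)] .
  have 1: "NOM f \<longleftrightarrow> (\<forall>i. strong_veto_set f i = veto_set f i)"
  proof
    assume "NOM f"
    then show "\<forall>i. strong_veto_set f i = veto_set f i"
      using V_sub_SV[OF _ assms(4,5)] sub by (simp add: set_eq_subset)
  next
    assume "\<forall>i. strong_veto_set f i = veto_set f i"
    then show "NOM f" by (rule NOM_if[OF assms(4)])
  qed
  have 2: "(\<forall>i. strong_veto_set f i = veto_set f i) \<longleftrightarrow>
    ((\<forall>i j. veto_set f i \<noteq> {} \<longrightarrow> veto_set f j \<noteq> {} \<longrightarrow> i = j) \<and>
       (\<forall>i. veto_set f i \<noteq> {} \<longrightarrow> strong_veto_set f i = veto_set f i))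
    \<or> (\<exists>y. \<forall>i. strong_veto_set f i = veto_set f i \<and> veto_set f i \<subseteq> {y})" (is "?A \<longleftrightarrow> ?B \<or> ?C")
  proof
    assume A: ?A
    show "?B \<or> ?C"
    proof (cases "\<forall>i j. veto_set f i \<noteq> {} \<longrightarrow> veto_set f j \<noteq> {} \<longrightarrow> i = j")
      case True then show ?thesis using A by blast
    next
      case False
      then obtain i j x z where ij: "i \<noteq> j" "x \<in> veto_set f i" "z \<in> veto_set f j" by blast
      have "x = z" using two_vetoers[OF assms(4) A ij] .
      have "\<forall>k. veto_set f k \<subseteq> {x}"
      proof (intro allI subsetI)
        fix k w assume w: "w \<in> veto_set f k"
        show "w \<in> {x}"
        proof (cases "k = i")
          case True
          then have "w = z" using two_vetoers[OF assms(4) A ij(1) _ ij(3)] w by blast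
          then show ?thesis using \<open>x = z\<close> by simp
        next
          case False
          then show ?thesis using two_vetoers[OF assms(4) A False w ij(2)] by simp
        qed
      qed
      then show ?thesis using A by blast
    qed
  next
    assume "?B \<or> ?C"
    then show ?A
    proof
      assume B: ?B
      show ?A
      proof
        fix i show "strong_veto_set f i = veto_set f i"
        proof (cases "veto_set f i = {}")
          case True then show ?thesis using sub[of i] by blast
        next
          case False then show ?thesis using B by blast
        qed
      qed
    next
      assume ?C then show ?A by blast
    qed
  qed
  show ?thesis using 1 2 by (rule trans)
qed

end
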